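(* Let $\mathcal G$ be a connected rank-$D$ uncolored tensor graph and let $T$ be a tree of white lines of $\mathcal G$ spanning all its bubbles. Let $\mathcal G_1=\mathcal G/T$ be the rosette obtained by contracting the lines of $T$. Then: - for every jacket $J$ of $\mathcal G_{\rm color}$, the pinched jacket $\widetilde J$ and the corresponding pinched jacket $\widetilde J_1$ of $\mathcal G_1$ satisfy $g_{\widetilde J}=g_{\widetilde J_1}$; - for every boundary jacket $J_\partial$, $g_{J_\partial}=g_{(J_\partial)_1}$, where $(J_\partial)_1$ is the same jacket of the boundary graph of $\mathcal G_1$.
   Context: Fix $D\ge 3$. A (D+1)-colored graph $\mathcal G_{\rm color}$ is a bipartite graph in which every vertex has exactly one half-line of each color $0,1,\dots,D$. Lines of colors $1,\dots,D$ ("colored lines") join two vertices. Lines of color $0$ ("white lines") either join two vertices (internal white lines) or are external legs attached to a single vertex. A rank-$D$ uncolored tensor graph $\mathcal G$ is identified with such a $\mathcal G_{\rm color}$: its bubbles (vertices) are the connected components of the subgraph formed by the colored lines, and its lines are the white lines. Contracting an internal white line joining vertices $v,w$ of $\mathcal G_{\rm color}$ that lie in different bubbles means the following: - delete $v$, $w$ and the white line; - for each color $i=1,\dots,D$, replace the two $i$-lines incident to $v$ and $w$ by a single $i$-line joining their other endpoints. A tree of white lines is contracted by contracting its lines successively. The result $\mathcal G/T$ is a rosette: it has a single bubble (a connected $D$-colored graph), and all its remaining internal white lines, as well as its external legs, are attached to that bubble. A face of colors $\{i,j\}$ is a maximal connected subgraph whose lines alternate between colors $i$ and $j$. It is closed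 if it is a cycle, and open if it is a path ending on external legs (possible only when $0\in\{i,j\}$). A jacket $J$ is a cycle on $\{0,\dots,D\}$ up to orientation. For $J=(n0m\dots)$, the pinched jacket $\widetilde J$ is the closed ribbon graph with the $V$ vertices and $L$ internal lines (colored lines and internal white lines) of $\mathcal G_{\rm color}$. Its faces are the closed faces with color pair consecutive in $J$, together with the closed cycles obtained by concatenating open $0n$ and open $0m$ faces alternately at the external legs. For connected $\mathcal G$, its genus is defined by $2-2g_{\widetilde J}=V-L+F_{\widetilde J}$. The boundary graph $\partial\mathcal G$ is the $D$-colored graph whose vertices are the external legs and whose lines of color $i$ are the open $\{0,i\}$ faces, each joining the two external legs at its ends. A boundary jacket $J_\partial$ is a cycle on $\{1,\dots,D\}$ up to orientation. Its genus is defined by $2C_{\partial\mathcal G}-2g_{J_\partial}=V_{\partial\mathcal G}-L_{\partial\mathcal G}+F_{J_\partial}$, where $C_{\partial\mathcal G}$ is the number of connected components of $\partial\mathcal G$ and $F_{J_\partial}$ counts the faces with color pair consecutive in $J_\partial$. *)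

theory Defs
  imports Complex_Main
begin

text \<open>A (D+1)-colored graph: a vertex set V together with, for each color i in 0..D,
  the map sending a vertex to the other endpoint of its i-line.  For color 0 it is an involution of V whose fixed points
  are exactly the vertices carrying an external leg (a white line cannot join a vertex
  to itself in a bipartite graph).\<close>

type_synonym 'v cgraph = "'v set \<times> (nat \<Rightarrow> 'v \<Rightarrow> 'v)"

definition verts :: "'v cgraph \<Rightarrow> 'v set" where "verts G = fst G"
definition sig :: "'v cgraph \<Rightarrow> nat \<Rightarrow> 'v \<Rightarrow> 'v" where "sig G = snd G"

definition colored_graph :: "nat \<Rightarrow> 'v cgraph \<Rightarrow> bool" where
  "colored_graph D G \<longleftrightarrow>
     finite (verts G) \<and>
     (\<forall>i\<le>D. \<forall>x\<in>verts G. sig G i x \<in> verts G \<and> sig G i (sig G i x) = x) \<and>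
     (\<forall>i\<in>{1..D}. \<forall>x\<in>verts G. sig G i x \<noteq> x) \<and>
     (\<exists>b::'v \<Rightarrow> bool. \<forall>i\<le>D. \<forall>x\<in>verts G. sig G i x \<noteq> x \<longrightarrow> b (sig G i x) \<noteq> b x)"

definition col_rel :: "'v cgraph \<Rightarrow> nat set \<Rightarrow> ('v \<times> 'v) set" where
  "col_rel G C = {(x, sig G i x) | x i. x \<in> verts G \<and> i \<in> C}"

definition ncomp :: "'v set \<Rightarrow> ('v \<times> 'v) set \<Rightarrow> nat" where
  "ncomp A R = card (A // (R\<^sup>*))"

definition cg_connected :: "nat \<Rightarrow> 'v cgraph \<Rightarrow> bool" where
  "cg_connected D G \<longleftrightarrow> verts G \<noteq> {} \<and>
     (\<forall>x\<in>verts G. \<forall>y\<in>verts G. (x, y) \<in> (col_rel G {0..D})\<^sup>*)"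

definition legs :: "'v cgraph \<Rightarrow> 'v set" where
  "legs G = {x \<in> verts G. sig G 0 x = x}"

text \<open>Number of closed faces of a color pair P (a face is a connected component of the
  subgraph of lines with colors in P; it is open iff it contains an external leg).\<close>
definition closed_faces :: "'v cgraph \<Rightarrow> nat set \<Rightarrow> nat" where
  "closed_faces G P = card {c \<in> verts G // ((col_rel G P)\<^sup>*). 0 \<in> P \<longrightarrow> c \<inter> legs G = {}}"

text \<open>Boundary graph: the i-line at external leg x is the open {0,i} face through x,
  joining x to the other leg at the end of that face.\<close>
definition bsig :: "'v cgraph \<Rightarrow> nat \<Rightarrow> 'v \<Rightarrow> 'v" where
  "bsig G i x = (THE y. y \<in> legs G \<and> y \<noteq> x \<and> (x, y) \<in> (col_rel G {0, i})\<^sup>*)"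

definition bd_rel :: "'v cgraph \<Rightarrow> nat set \<Rightarrow> ('v \<times> 'v) set" where
  "bd_rel G C = {(x, bsig G i x) | x i. x \<in> legs G \<and> i \<in> C}"

text \<open>Jackets: cycles on the colors, given by a list (up to rotation/orientation, which do
  not affect the set of consecutive pairs).\<close>
definition jacket_pairs :: "nat list \<Rightarrow> nat set set" where
  "jacket_pairs js = {{js ! k, js ! (Suc k mod length js)} | k. k < length js}"

definition is_jacket :: "nat \<Rightarrow> nat list \<Rightarrow> bool" where
  "is_jacket D js \<longleftrightarrow> distinct js \<and> set js = {0..D}"

definition is_bjacket :: "nat \<Rightarrow> nat list \<Rightarrow> bool" where
  "is_bjacket D js \<longleftrightarrow> distinct js \<and> set js = {1..D}"

text \<open>Internal lines: D|V|/2 colored lines and (|V| - #legs)/2 internal white lines.\<close>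
definition n_int_lines :: "nat \<Rightarrow> 'v cgraph \<Rightarrow> real" where
  "n_int_lines D G = (real D * real (card (verts G)) + real (card (verts G)) - real (card (legs G))) / 2"

text \<open>Faces of the pinched jacket: closed faces with consecutive colors, plus the cycles
  formed by alternating open 0n and 0m faces (n, m the neighbours of 0 in J), i.e. the
  {n,m}-faces of the boundary graph.\<close>
definition pinched_faces :: "'v cgraph \<Rightarrow> nat list \<Rightarrow> nat" where
  "pinched_faces G js = (\<Sum>P\<in>jacket_pairs js. closed_faces G P)
     + ncomp (legs G) (bd_rel G {c. {0, c} \<in> jacket_pairs js})"

definition pinched_genus :: "nat \<Rightarrow> 'v cgraph \<Rightarrow> nat list \<Rightarrow> real" where
  "pinched_genus D G js =
     (2 - real (card (verts G)) + n_int_lines D G - real (pinched_faces G js)) / 2"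

definition boundary_genus :: "nat \<Rightarrow> 'v cgraph \<Rightarrow> nat list \<Rightarrow> real" where
  "boundary_genus D G js =
     (2 * real (ncomp (legs G) (bd_rel G {1..D})) - real (card (legs G))
      + real D * real (card (legs G)) / 2
      - real (\<Sum>P\<in>jacket_pairs js. ncomp (legs G) (bd_rel G P))) / 2"

definition int_white :: "'v cgraph \<Rightarrow> 'v \<times> 'v \<Rightarrow> bool" where
  "int_white G t \<longleftrightarrow> fst t \<in> verts G \<and> snd t = sig G 0 (fst t) \<and> snd t \<noteq> fst t"

text \<open>Connectivity of the graph whose nodes are bubbles and whose edges are the lines of T.\<close>
definition tree_conn :: "nat \<Rightarrow> 'v cgraph \<Rightarrow> ('v \<times> 'v) set \<Rightarrow> bool" where
  "tree_conn D G T \<longleftrightarrow> (\<forall>x\<in>verts G. \<forall>y\<in>verts G.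
     (x, y) \<in> (col_rel G {1..D} \<union> T \<union> T\<inverse>)\<^sup>*)"

text \<open>T is a tree of white lines spanning all bubbles: a minimally connected set of
  internal white lines on the bubble graph.\<close>
definition white_tree :: "nat \<Rightarrow> 'v cgraph \<Rightarrow> ('v \<times> 'v) list \<Rightarrow> bool" where
  "white_tree D G ts \<longleftrightarrow> (\<forall>t\<in>set ts. int_white G t) \<and>
     distinct (map (\<lambda>(v, w). {v, w}) ts) \<and>
     tree_conn D G (set ts) \<and> (\<forall>t\<in>set ts. \<not> tree_conn D G (set ts - {t}))"

definition contract :: "'v cgraph \<Rightarrow> 'v \<times> 'v \<Rightarrow> 'v cgraph" where
  "contract G t = (let v = fst t; w = snd t in
     (verts G - {v, w},
      \<lambda>i x. if i = 0 then sig G 0 x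
            else if x = sig G i v then sig G i w
            else if x = sig G i w then sig G i v
            else sig G i x))"

definition contract_tree :: "'v cgraph \<Rightarrow> ('v \<times> 'v) list \<Rightarrow> 'v cgraph" where
  "contract_tree G ts = foldl contract G ts"

end

theory Submission
  imports Defs
begin

lemma sym_col_rel:
  assumes "colored_graph D G" "P \<subseteq> {0..D}"
  shows "sym (col_rel G P)"
  using assms unfolding colored_graph_def col_rel_def sym_def
  by (smt (verit, best) atLeastAtMost_iff mem_Collect_eq prod.inject subsetD)

lemma col_rel_V:
  assumes "colored_graph D G" "P \<subseteq> {0..D}" "(x,y) \<in> col_rel G P"
  shows "x \<in> verts G" "y \<in> verts G"
  using assms unfolding colored_graph_def col_rel_def by auto

lemma rtr_V:
  assumes "colored_graph D G" "P \<subseteq> {0..D}" "(x,y) \<in> (col_rel G P)\<^sup>*" "x \<in> verts G"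
  shows "y \<in> verts G"
  using assms(3,4) by induction (use col_rel_V[OF assms(1,2)] in auto)

lemma col_rel_mono: "P \<subseteq> Q \<Longrightarrow> col_rel G P \<subseteq> col_rel G Q"
  unfolding col_rel_def by auto

lemma col_relI: "x \<in> verts G \<Longrightarrow> i \<in> P \<Longrightarrow> (x, sig G i x) \<in> col_rel G P"
  unfolding col_rel_def by auto

lemma sym_rtr_eq:
  assumes "sym R" "(x,y) \<in> R\<^sup>*" shows "R\<^sup>*``{x} = R\<^sup>*``{y}"
proof -
  have s: "sym (R\<^sup>*)" using sym_rtrancl[OF assms(1)] .
  have "(y,x) \<in> R\<^sup>*" using s assms(2) by (meson symD)
  then show ?thesis using assms(2) by (auto intro: rtrancl_trans)
qed

lemma union_edge_class:
  assumes sR: "sym R"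
  shows "(R \<union> {(a,b),(b,a)})\<^sup>*``{x} =
    (if x \<in> R\<^sup>*``{a} \<union> R\<^sup>*``{b} then R\<^sup>*``{a} \<union> R\<^sup>*``{b} else R\<^sup>*``{x})"
    (is "?L = ?T")
proof -
  let ?E = "R \<union> {(a,b),(b,a)}"
  have s: "sym (R\<^sup>*)" using sym_rtrancl[OF sR] .
  have sw: "(p,q) \<in> R\<^sup>* \<Longrightarrow> (q,p) \<in> R\<^sup>*" for p q using s by (meson symD)
  have RE: "R\<^sup>* \<subseteq> ?E\<^sup>*" by (rule rtrancl_mono) blast
  have ab: "(a,b) \<in> ?E\<^sup>*" "(b,a) \<in> ?E\<^sup>*" by auto
  show ?thesis
  proof
    show "?L \<subseteq> ?T"
    proof
      fix y assume "y \<in> ?L"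
      then have "(x,y) \<in> ?E\<^sup>*" by simp
      then show "y \<in> ?T"
      proof (induction rule: rtrancl_induct)
        case base
        then show ?case by auto
      next
        case (step y z)
        show ?case
        proof (cases "(y,z) \<in> R")
          case True
          then show ?thesis using step.IH by (auto split: if_splits intro: rtrancl_into_rtrancl)
        next
          case False
          then have yz: "(y,z) = (a,b) \<or> (y,z) = (b,a)" using step.hyps(2) by auto
          show ?thesis
          proof (cases "x \<in> R\<^sup>*``{a} \<union> R\<^sup>*``{b}")
            case True
            then show ?thesis using yz by auto
          next
            case F: False
            then have "(x,y) \<in> R\<^sup>*" using step.IH by simp
            then have "x \<in> R\<^sup>*``{a} \<union> R\<^sup>*``{b}" using yz sw by auto
            then show ?thesis using F by simp
          qed
        qed
      qed
    qed
  next
    show "?T \<subseteq> ?L"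
    proof (cases "x \<in> R\<^sup>*``{a} \<union> R\<^sup>*``{b}")
      case True
      then have xa: "(x,a) \<in> ?E\<^sup>*" using sw RE ab by (auto intro: rtrancl_trans)
      have "R\<^sup>*``{a} \<union> R\<^sup>*``{b} \<subseteq> ?L"
      proof
        fix y assume "y \<in> R\<^sup>*``{a} \<union> R\<^sup>*``{b}"
        then have "(a,y) \<in> ?E\<^sup>*" using RE ab by (auto intro: rtrancl_trans)
        then show "y \<in> ?L" using xa by (auto intro: rtrancl_trans)
      qed
      then show ?thesis using True by simp
    next
      case False
      then show ?thesis using RE by auto
    qed
  qed
qed

locale cstep =
  fixes D :: nat and G :: "'v cgraph" and v w :: 'v
  assumes cg: "colored_graph D G" and vV: "v \<in> verts G" and w_def: "w = sig G 0 v"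
    and vw: "v \<noteq> w" and nb: "(v,w) \<notin> (col_rel G {1..D})\<^sup>*"
begin

abbreviation "s \<equiv> sig G"
abbreviation "V \<equiv> verts G"
definition "G' = contract G (v,w)"
abbreviation "s' \<equiv> sig G'"
abbreviation "V' \<equiv> verts G'"

lemma V'_eq: "V' = V - {v,w}"
  unfolding G'_def contract_def verts_def by (simp add: Let_def)

lemma s'0: "s' 0 = s 0"
  unfolding G'_def contract_def sig_def by (simp add: Let_def)

lemma s'i: "i \<noteq> 0 \<Longrightarrow> s' i x = (if x = s i v then s i w else if x = s i w then s i v else s i x)"
  unfolding G'_def contract_def sig_def by (simp add: Let_def)

lemma finV: "finite V" using cg unfolding colored_graph_def by auto
lemma inv: "i \<le> D \<Longrightarrow> x \<in> V \<Longrightarrow> s i x \<in> V \<and> s i (s i x) = x"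
  using cg unfolding colored_graph_def by auto
lemma nofix: "1 \<le> i \<Longrightarrow> i \<le> D \<Longrightarrow> x \<in> V \<Longrightarrow> s i x \<noteq> x"
  using cg unfolding colored_graph_def by auto

lemma wV: "w \<in> V" using inv[of 0 v] vV w_def by auto
lemma s0w: "s 0 w = v" using inv[of 0 v] vV w_def by auto

lemma siv_ne_w: "1 \<le> i \<Longrightarrow> i \<le> D \<Longrightarrow> s i v \<noteq> w"
  using nb col_relI[OF vV, of i "{1..D}"] by auto

lemma siw_ne_v: "1 \<le> i \<Longrightarrow> i \<le> D \<Longrightarrow> s i w \<noteq> v"
  using siv_ne_w inv[OF _ wV] by metis

lemma siv_ne_siw: "i \<le> D \<Longrightarrow> s i v \<noteq> s i w"
  using inv[OF _ vV] inv[OF _ wV] vw by metis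

lemma s'_maps: assumes "i \<le> D" "x \<in> V'" shows "s' i x \<in> V' \<and> s' i (s' i x) = x"
proof (cases "i = 0")
  case True
  have xV: "x \<in> V" "x \<noteq> v" "x \<noteq> w" using assms V'_eq by auto
  have a: "s 0 x \<in> V" "s 0 (s 0 x) = x" using inv[of 0 x] xV by auto
  have "s 0 x \<noteq> v" using a xV w_def by metis
  moreover have "s 0 x \<noteq> w" using a xV s0w by metis
  ultimately show ?thesis using True s'0 a V'_eq by simp
next
  case False
  then have i1: "1 \<le> i" by simp
  have xV: "x \<in> V" "x \<noteq> v" "x \<noteq> w" using assms V'_eq by auto
  have h: "s i v \<noteq> w" "s i w \<noteq> v" "s i v \<noteq> s i w" "s i v \<in> V" "s i w \<in> V"
     "s i (s i v) = v" "s i (s i w) = w" "s i v \<noteq> v" "s i w \<noteq> w"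
    using siv_ne_w[OF i1 assms(1)] siw_ne_v[OF i1 assms(1)] siv_ne_siw[OF assms(1)]
      inv[OF assms(1) vV] inv[OF assms(1) wV] nofix[OF i1 assms(1) vV] nofix[OF i1 assms(1) wV] by auto
  have hx: "s i x \<in> V" "s i (s i x) = x" using inv[OF assms(1) xV(1)] by auto
  have e: "s' i y = (if y = s i v then s i w else if y = s i w then s i v else s i y)" for y
    using s'i[OF False] .
  show ?thesis
  proof (cases "x = s i v")
    case True
    have "s' i x = s i w" using e True by simp
    moreover have "s' i (s i w) = s i v" using e h(3) by simp
    ultimately show ?thesis using h True V'_eq by simp
  next
    case F1: False
    show ?thesis
    proof (cases "x = s i w")
      case True
      have "s' i x = s i v" using e True h(3) by simp
      moreover have "s' i (s i v) = s i w" using e by simp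
      ultimately show ?thesis using h True V'_eq by simp
    next
      case F2: False
      have 1: "s i x \<noteq> v" using F1 hx by metis
      have 2: "s i x \<noteq> w" using F2 hx by metis
      have 3: "s i x \<noteq> s i v" using xV(2) hx h(6) by metis
      have 4: "s i x \<noteq> s i w" using xV(3) hx h(7) by metis
      have "s' i x = s i x" using e F1 F2 by simp
      moreover have "s' i (s i x) = x" using e 3 4 hx by simp
      ultimately show ?thesis using 1 2 hx V'_eq by simp
    qed
  qed
qed

lemma cg': "colored_graph D G'"
proof -
  obtain b :: "'v \<Rightarrow> bool" where b: "\<forall>i\<le>D. \<forall>x\<in>V. s i x \<noteq> x \<longrightarrow> b (s i x) \<noteq> b x"
    using cg unfolding colored_graph_def by auto
  have B: "s' i x \<noteq> x" if "i \<in> {1..D}" "x \<in> V'" for i x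
  proof -
    have i0: "i \<noteq> 0" "i \<le> D" "1 \<le> i" using that by auto
    have xV: "x \<in> V" using that V'_eq by auto
    have e: "s' i x = (if x = s i v then s i w else if x = s i w then s i v else s i x)"
      using s'i[OF i0(1)] .
    show ?thesis using e siv_ne_siw[OF i0(2)] nofix[OF i0(3) i0(2) xV] by auto
  qed
  have C: "b (s' i x) \<noteq> b x" if "i \<le> D" "x \<in> V'" "s' i x \<noteq> x" for i x
  proof (cases "i = 0")
    case True
    have "x \<in> V" using that V'_eq by auto
    then show ?thesis using b that True s'0 by auto
  next
    case False
    have xV: "x \<in> V" using that V'_eq by auto
    have bv: "b (s i v) \<noteq> b v" "b (s i w) \<noteq> b w" "b w \<noteq> b v"
    proof -
      show "b (s i v) \<noteq> b v" using b that(1) False nofix[OF _ _ vV, of i] vV by simp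
      show "b (s i w) \<noteq> b w" using b that(1) False nofix[OF _ _ wV, of i] wV by simp
      have "b (s 0 v) \<noteq> b v" using b vV w_def vw by auto
      then show "b w \<noteq> b v" using w_def by simp
    qed
    have e: "s' i x = (if x = s i v then s i w else if x = s i w then s i v else s i x)"
      using s'i[OF False] .
    have nf: "s i x \<noteq> x" using nofix[of i x] False that(1) xV by simp
    have bx: "b (s i x) \<noteq> b x" using b that(1) xV nf by simp
    show ?thesis
    proof (cases "x = s i v")
      case True then show ?thesis using e bv by auto
    next
      case F1: False
      show ?thesis
      proof (cases "x = s i w")
        case True then show ?thesis using e bv siv_ne_siw[OF that(1)] by auto
      next
        case F2: False
        then show ?thesis using e F1 bx by simp
      qed
    qed
  qed
  have fin: "finite V'" using finV V'_eq by auto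
  show ?thesis unfolding colored_graph_def
    apply (intro conjI)
    subgoal using fin .
    subgoal using s'_maps by blast
    subgoal using B by blast
    subgoal using C by blast
    done
qed


abbreviation "R P \<equiv> col_rel G P"
abbreviation "R' P \<equiv> col_rel G' P"
definition "E P = R P \<union> {(v,w),(w,v)}"

lemma V'_sub: "x \<in> V' \<Longrightarrow> x \<in> V \<and> x \<noteq> v \<and> x \<noteq> w" using V'_eq by auto

lemma Rp_sub_E:
  assumes P: "P \<subseteq> {0..D}" and xy: "(x,y) \<in> R' P"
  shows "(x,y) \<in> (E P)\<^sup>*"
proof -
  obtain j where j: "j \<in> P" "x \<in> V'" "y = s' j x" using xy unfolding col_rel_def by auto
  have jD: "j \<le> D" using j P by auto
  have xV: "x \<in> V" using j V'_sub by auto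
  have RE: "R P \<subseteq> E P" unfolding E_def by auto
  show ?thesis
  proof (cases "j = 0")
    case True
    then have "(x,y) \<in> R P" using j xV s'0 col_relI[of x G j P] by simp
    then show ?thesis using RE by auto
  next
    case False
    have e: "s' j x = (if x = s j v then s j w else if x = s j w then s j v else s j x)"
      using s'i[OF False] .
    show ?thesis
    proof (cases "x = s j v")
      case True
      have "(x, v) \<in> R P" using col_relI[OF xV j(1)] True inv[OF jD vV] by simp
      moreover have "(v, w) \<in> E P" unfolding E_def by simp
      moreover have "(w, s j w) \<in> R P" using col_relI[OF wV j(1)] .
      ultimately have "(x, s j w) \<in> (E P)\<^sup>*" using RE
        by (meson r_into_rtrancl rtrancl_trans subsetD)
      then show ?thesis using j e True by simp
    next
      case F1: False
      show ?thesis
      proof (cases "x = s j w")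
        case True
        have "(x, w) \<in> R P" using col_relI[OF xV j(1)] True inv[OF jD wV] by simp
        moreover have "(w, v) \<in> E P" unfolding E_def by simp
        moreover have "(v, s j v) \<in> R P" using col_relI[OF vV j(1)] .
        ultimately have "(x, s j v) \<in> (E P)\<^sup>*" using RE
          by (meson r_into_rtrancl rtrancl_trans subsetD)
        then show ?thesis using j e True F1 siv_ne_siw[OF jD] by simp
      next
        case False
        have "(x, s j x) \<in> R P" using col_relI[OF xV j(1)] .
        then show ?thesis using j e F1 False RE by auto
      qed
    qed
  qed
qed

lemma sjv_V': "1 \<le> j \<Longrightarrow> j \<le> D \<Longrightarrow> s j v \<in> V'"
  using inv[OF _ vV, of j] nofix[OF _ _ vV, of j] siv_ne_w[of j] V'_eq by auto
lemma sjw_V': "1 \<le> j \<Longrightarrow> j \<le> D \<Longrightarrow> s j w \<in> V'"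
  using inv[OF _ wV, of j] nofix[OF _ _ wV, of j] siw_ne_v[of j] V'_eq by auto

lemma edge_vw:
  assumes "j \<in> P" "j \<noteq> 0" "j \<le> D"
  shows "(s j v, s j w) \<in> R' P" "(s j w, s j v) \<in> R' P"
proof -
  have e: "s' j y = (if y = s j v then s j w else if y = s j w then s j v else s j y)" for y
    using s'i[OF assms(2)] .
  have j1: "1 \<le> j" using assms by simp
  show "(s j v, s j w) \<in> R' P" using col_relI[OF sjv_V'[OF j1 assms(3)] assms(1)] e by simp
  show "(s j w, s j v) \<in> R' P" using col_relI[OF sjw_V'[OF j1 assms(3)] assms(1)] e
      siv_ne_siw[OF assms(3)] by simp
qed

definition hub :: "nat set \<Rightarrow> bool" where
  "hub P \<longleftrightarrow> (\<forall>j\<in>P-{0}. \<forall>j'\<in>P-{0}. (s j v, s j' v) \<in> (R' P)\<^sup>*)"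

lemma helper:
  assumes P: "P \<subseteq> {0..D}" and H: "hub P" and j: "j \<in> P - {0}"
    and x: "(x, s j v) \<in> (R' P)\<^sup>* \<or> (x, s j w) \<in> (R' P)\<^sup>*"
  shows "\<forall>j'\<in>P-{0}. (x, s j' v) \<in> (R' P)\<^sup>* \<and> (x, s j' w) \<in> (R' P)\<^sup>*"
proof -
  have jD: "j \<le> D" using j P by auto
  have ed: "(s j w, s j v) \<in> R' P" using edge_vw[of j P] j jD by auto
  have xv: "(x, s j v) \<in> (R' P)\<^sup>*"
    using x ed by (meson rtrancl.rtrancl_into_rtrancl)
  show ?thesis
  proof
    fix j' assume j': "j' \<in> P - {0}"
    have j'D: "j' \<le> D" using j' P by auto
    have a: "(x, s j' v) \<in> (R' P)\<^sup>*" using xv H j j' unfolding hub_def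
      by (meson rtrancl_trans)
    moreover have "(s j' v, s j' w) \<in> R' P" using edge_vw[of j' P] j' j'D by auto
    ultimately have "(x, s j' w) \<in> (R' P)\<^sup>*" by (meson rtrancl.rtrancl_into_rtrancl)
    with a show "(x, s j' v) \<in> (R' P)\<^sup>* \<and> (x, s j' w) \<in> (R' P)\<^sup>*" by simp
  qed
qed

lemma class_eq:
  assumes P: "P \<subseteq> {0..D}" and H: "hub P" and x: "x \<in> V'"
  shows "(R' P)\<^sup>*``{x} = (E P)\<^sup>*``{x} - {v,w}"
proof
  show "(R' P)\<^sup>*``{x} \<subseteq> (E P)\<^sup>*``{x} - {v,w}"
  proof
    fix y assume "y \<in> (R' P)\<^sup>*``{x}"
    then have y: "(x,y) \<in> (R' P)\<^sup>*" by simp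
    have "(R' P)\<^sup>* \<subseteq> (E P)\<^sup>*" using Rp_sub_E[OF P] by (intro rtrancl_subset_rtrancl) auto
    moreover have "y \<in> V'" using rtr_V[OF cg' P y x] .
    ultimately show "y \<in> (E P)\<^sup>*``{x} - {v,w}" using y V'_eq by auto
  qed
next
  have main: "(y \<notin> {v,w} \<longrightarrow> (x,y) \<in> (R' P)\<^sup>*) \<and>
     (y \<in> {v,w} \<longrightarrow> (\<forall>j\<in>P-{0}. (x, s j v) \<in> (R' P)\<^sup>* \<and> (x, s j w) \<in> (R' P)\<^sup>*))"
    if "(x,y) \<in> (E P)\<^sup>*" for y
    using that
  proof (induction rule: rtrancl_induct)
    case base
    then show ?case using x V'_eq by auto
  next
    case (step y z)
    show ?case
    proof (cases "(y,z) \<in> {(v,w),(w,v)}")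
      case True
      then show ?thesis using step.IH by auto
    next
      case False
      then have yz: "(y,z) \<in> R P" using step.hyps(2) unfolding E_def by auto
      then obtain j where j: "j \<in> P" "y \<in> V" "z = s j y" unfolding col_rel_def by auto
      have jD: "j \<le> D" using j P by auto
      have zy: "s j z = y" using inv[OF jD j(2)] j by simp
      show ?thesis
      proof (cases "y \<in> {v,w}")
        case yin: True
        show ?thesis
        proof (cases "z \<in> {v,w}")
          case True then show ?thesis using step.IH yin by auto
        next
          case zout: False
          have j0: "j \<noteq> 0"
          proof
            assume "j = 0"
            then have "z = s 0 y" using j by simp
            then show False using yin zout w_def s0w by auto
          qed
          have zz: "z = s j v \<or> z = s j w" using yin j by auto
          have jP: "j \<in> P - {0}" using j j0 by simp
          have "(x, s j v) \<in> (R' P)\<^sup>* \<and> (x, s j w) \<in> (R' P)\<^sup>*" using step.IH yin jP by blast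
          then have "(x, z) \<in> (R' P)\<^sup>*" using zz by blast
          then show ?thesis using zout by simp
        qed
      next
        case yout: False
        have yV': "y \<in> V'" using yout j V'_eq by auto
        have xy: "(x,y) \<in> (R' P)\<^sup>*" using step.IH yout by simp
        show ?thesis
        proof (cases "z \<in> {v,w}")
          case True
          have j0: "j \<noteq> 0"
          proof
            assume "j = 0"
            then have "y = s 0 z" using zy by simp
            then show False using True yout w_def s0w by auto
          qed
          have yy: "y = s j v \<or> y = s j w" using zy True by auto
          have jP: "j \<in> P - {0}" using j j0 by simp
          have "(x, s j v) \<in> (R' P)\<^sup>* \<or> (x, s j w) \<in> (R' P)\<^sup>*" using xy yy by blast
          from helper[OF P H jP this]
          have "\<forall>j'\<in>P-{0}. (x, s j' v) \<in> (R' P)\<^sup>* \<and> (x, s j' w) \<in> (R' P)\<^sup>*" .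
          then show ?thesis using True by simp
        next
          case zout: False
          have "(y, z) \<in> R' P"
          proof (cases "j = 0")
            case True
            then show ?thesis using col_relI[OF yV' j(1)] s'0 j by simp
          next
            case False
            have e: "s' j y = (if y = s j v then s j w else if y = s j w then s j v else s j y)"
              using s'i[OF False] .
            have "y \<noteq> s j v" using zout j inv[OF jD vV] by auto
            moreover have "y \<noteq> s j w" using zout j inv[OF jD wV] by auto
            ultimately show ?thesis using col_relI[OF yV' j(1)] e j by simp
          qed
          then show ?thesis using xy zout by (meson rtrancl.rtrancl_into_rtrancl)
        qed
      qed
    qed
  qed
  show "(E P)\<^sup>*``{x} - {v,w} \<subseteq> (R' P)\<^sup>*``{x}"
    using main by auto
qed


lemma hub_triv: "P - {0} \<subseteq> {i} \<Longrightarrow> hub P"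
  unfolding hub_def by auto

lemma cycle:
  assumes k: "k \<in> {1..D}" and k': "k' \<in> {1..D}" and kk: "k \<noteq> k'"
    and P: "P \<subseteq> {0..D}" and kP: "{k,k'} \<subseteq> P"
  shows "(s k v, s k' v) \<in> (R' P)\<^sup>*"
proof -
  obtain b :: "'v \<Rightarrow> bool" where b: "\<forall>i\<le>D. \<forall>x\<in>V. s i x \<noteq> x \<longrightarrow> b (s i x) \<noteq> b x"
    using cg unfolding colored_graph_def by auto
  define \<sigma> where "\<sigma> = s k"
  define \<rho> where "\<rho> = s k'"
  define \<tau> where "\<tau> x = (if x \<in> V then \<rho> (\<sigma> x) else x)" for x
  have kD: "k \<le> D" "1 \<le> k" "k' \<le> D" "1 \<le> k'" using k k' by auto
  have sV: "x \<in> V \<Longrightarrow> \<sigma> x \<in> V \<and> \<sigma> (\<sigma> x) = x" for x using inv[OF kD(1)] \<sigma>_def by auto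
  have rV: "x \<in> V \<Longrightarrow> \<rho> x \<in> V \<and> \<rho> (\<rho> x) = x" for x using inv[OF kD(3)] \<rho>_def by auto
  have tV: "x \<in> V \<Longrightarrow> \<tau> x \<in> V" for x using sV rV \<tau>_def by auto
  have inj: "inj \<tau>"
  proof (rule injI)
    fix x y assume e: "\<tau> x = \<tau> y"
    show "x = y"
    proof (cases "x \<in> V"; cases "y \<in> V")
      assume "x \<in> V" "y \<in> V"
      then show ?thesis using e sV rV \<tau>_def by metis
    next
      assume "x \<in> V" "y \<notin> V"
      then show ?thesis using e tV \<tau>_def by metis
    next
      assume "x \<notin> V" "y \<in> V"
      then show ?thesis using e tV \<tau>_def by metis
    next
      assume "x \<notin> V" "y \<notin> V"
      then show ?thesis using e \<tau>_def by metis
    qed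
  qed
  have pV: "(\<tau> ^^ n) v \<in> V" for n by (induction n) (auto simp: vV tV)
  have fin: "finite {y. \<exists>n. y = (\<tau> ^^ n) v}"
  proof (rule finite_subset[OF _ finV])
    show "{y. \<exists>n. y = (\<tau> ^^ n) v} \<subseteq> V" using pV by blast
  qed
  obtain n0 where n0: "n0 > 0" "(\<tau> ^^ n0) v = v" using funpow_inj_finite[OF inj fin] by blast
  define m where "m = (LEAST n. n > 0 \<and> (\<tau> ^^ n) v = v)"
  have m: "m > 0" "(\<tau> ^^ m) v = v" using LeastI[of "\<lambda>n. n > 0 \<and> (\<tau> ^^ n) v = v" n0] n0 m_def by auto
  have mmin: "0 < j \<Longrightarrow> j < m \<Longrightarrow> (\<tau> ^^ j) v \<noteq> v" for j
    using not_less_Least[of j "\<lambda>n. n > 0 \<and> (\<tau> ^^ n) v = v"] m_def by auto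
  have tS: "(\<tau> ^^ Suc j) v = \<rho> (\<sigma> ((\<tau> ^^ j) v))" for j using pV[of j] \<tau>_def by simp
  have bs: "x \<in> V \<Longrightarrow> b (\<sigma> x) \<noteq> b x" for x using b kD nofix[OF kD(2) kD(1)] \<sigma>_def by auto
  have br: "x \<in> V \<Longrightarrow> b (\<rho> x) \<noteq> b x" for x using b kD nofix[OF kD(4) kD(3)] \<rho>_def by auto
  have bt: "b ((\<tau> ^^ j) v) = b v" for j
  proof (induction j)
    case (Suc j)
    have "b (\<rho> (\<sigma> ((\<tau> ^^ j) v))) = b ((\<tau> ^^ j) v)"
      using bs[OF pV[of j]] br[of "\<sigma> ((\<tau> ^^ j) v)"] sV[OF pV[of j]] by auto
    then show ?case using tS Suc by simp
  qed simp
  have snv: "\<sigma> ((\<tau> ^^ j) v) \<noteq> v" for j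
    using bs[OF pV[of j]] bt[of j] by auto
  let ?Rc = "R {1..D}"
  have Rs: "x \<in> V \<Longrightarrow> (x, \<sigma> x) \<in> ?Rc" for x using col_relI[of x G k "{1..D}"] k \<sigma>_def by simp
  have Rr: "x \<in> V \<Longrightarrow> (x, \<rho> x) \<in> ?Rc" for x using col_relI[of x G k' "{1..D}"] k' \<rho>_def by simp
  have reach: "(v, (\<tau> ^^ j) v) \<in> ?Rc\<^sup>*" for j
  proof (induction j)
    case (Suc j)
    have "(v, \<sigma> ((\<tau> ^^ j) v)) \<in> ?Rc\<^sup>*" using Suc Rs[OF pV[of j]] by (meson rtrancl.rtrancl_into_rtrancl)
    then have "(v, \<rho> (\<sigma> ((\<tau> ^^ j) v))) \<in> ?Rc\<^sup>*" using Rr sV[OF pV[of j]]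
      by (meson rtrancl.rtrancl_into_rtrancl)
    then show ?case using tS by simp
  qed simp
  have reach2: "(v, \<sigma> ((\<tau> ^^ j) v)) \<in> ?Rc\<^sup>*" for j
    using reach[of j] Rs[OF pV[of j]] by (meson rtrancl.rtrancl_into_rtrancl)
  have tnw: "(\<tau> ^^ j) v \<noteq> w" for j using reach[of j] nb by auto
  have snw: "\<sigma> ((\<tau> ^^ j) v) \<noteq> w" for j using reach2[of j] nb by auto
  have k0: "k \<noteq> 0" "k' \<noteq> 0" using kD by auto
  have ek: "s' k y = (if y = s k v then s k w else if y = s k w then s k v else s k y)" for y
    using s'i[OF k0(1)] .
  have ek': "s' k' y = (if y = s k' v then s k' w else if y = s k' w then s k' v else s k' y)" for y
    using s'i[OF k0(2)] .
  have claim: "j < m \<Longrightarrow> (s k v, \<sigma> ((\<tau> ^^ j) v)) \<in> (R' P)\<^sup>*" for j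
  proof (induction j)
    case 0
    then show ?case using \<sigma>_def by simp
  next
    case (Suc j)
    let ?y = "\<sigma> ((\<tau> ^^ j) v)"
    let ?u = "(\<tau> ^^ Suc j) v"
    have IH: "(s k v, ?y) \<in> (R' P)\<^sup>*" using Suc by simp
    have yV: "?y \<in> V" using sV pV by blast
    have yV': "?y \<in> V'" using yV snv snw V'_eq by auto
    have u: "?u = \<rho> ?y" using tS by simp
    have uv: "?u \<noteq> v" using mmin[of "Suc j"] Suc.prems by simp
    have "?y \<noteq> s k' v" using u uv rV[OF vV] \<rho>_def by metis
    moreover have "?y \<noteq> s k' w" using u tnw[of "Suc j"] rV[OF wV] \<rho>_def by metis
    ultimately have s1: "s' k' ?y = ?u" using ek' u \<rho>_def by simp
    have e1: "(?y, ?u) \<in> R' P" using col_relI[OF yV', of k' P] s1 kP by simp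
    have uV': "?u \<in> V'" using pV uv tnw V'_eq by blast
    have "?u \<noteq> s k v" using snv[of "Suc j"] sV[OF vV] \<sigma>_def by metis
    moreover have "?u \<noteq> s k w" using snw[of "Suc j"] sV[OF wV] \<sigma>_def by metis
    ultimately have s2: "s' k ?u = \<sigma> ?u" using ek \<sigma>_def by simp
    have e2: "(?u, \<sigma> ?u) \<in> R' P" using col_relI[OF uV', of k P] s2 kP by simp
    show ?case using IH e1 e2 by (meson rtrancl.rtrancl_into_rtrancl)
  qed
  obtain j where j: "m = Suc j" using m(1) gr0_implies_Suc by blast
  have "(s k v, \<sigma> ((\<tau> ^^ j) v)) \<in> (R' P)\<^sup>*" using claim j by simp
  moreover have "\<rho> (\<sigma> ((\<tau> ^^ j) v)) = v" using tS m(2) j by simp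
  then have "\<sigma> ((\<tau> ^^ j) v) = \<rho> v" using rV sV pV by metis
  ultimately show ?thesis using \<rho>_def by simp
qed

lemma hub_pair:
  assumes k: "k \<in> {1..D}" and k': "k' \<in> {1..D}" and kk: "k \<noteq> k'"
  shows "hub {k,k'}"
  unfolding hub_def
proof (intro ballI)
  fix j j' assume j: "j \<in> {k,k'} - {0}" and j': "j' \<in> {k,k'} - {0}"
  have P: "{k,k'} \<subseteq> {0..D}" using k k' by auto
  show "(s j v, s j' v) \<in> (R' {k,k'})\<^sup>*"
  proof (cases "j = j'")
    case True then show ?thesis by simp
  next
    case False
    then have "{j,j'} = {k,k'}" using j j' by auto
    moreover have "j \<in> {1..D}" "j' \<in> {1..D}" using j j' k k' by auto
    ultimately show ?thesis using cycle[of j j' "{k,k'}"] False P by auto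
  qed
qed

lemma s0v_ne: "s 0 v \<noteq> v" "s 0 w \<noteq> w"
  using w_def vw s0w by metis+

lemma v_notin_legs: "v \<notin> legs G" "w \<notin> legs G"
  unfolding legs_def using s0v_ne by blast+

lemma legs_eq: "legs G' = legs G"
proof -
  have "legs G' = {x \<in> V'. s 0 x = x}" unfolding legs_def using s'0 by simp
  also have "\<dots> = {x \<in> V. s 0 x = x} - {v,w}" using V'_eq by blast
  also have "\<dots> = {x \<in> V. s 0 x = x}" using s0v_ne by blast
  finally show ?thesis unfolding legs_def .
qed

lemma card_V': "card V' = card V - 2"
proof -
  have "card (V - {v,w}) = card V - card {v,w}"
    using finV vV wV by (intro card_Diff_subset) auto
  then show ?thesis using V'_eq vw by simp
qed

lemma E_eq_R: "0 \<in> P \<Longrightarrow> E P = R P"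
proof -
  assume "0 \<in> P"
  then have "(v, w) \<in> R P" "(w, v) \<in> R P"
    using col_relI[OF vV, of 0 P] col_relI[OF wV, of 0 P] w_def s0w by auto
  then show ?thesis unfolding E_def by auto
qed

lemma quot_img: "A // r = (\<lambda>x. r``{x}) ` A"
  unfolding quotient_def by auto

lemma cf_0:
  assumes i: "i \<in> {1..D}"
  shows "closed_faces G' {0,i} = closed_faces G {0,i}"
proof -
  let ?P = "{0,i}"
  have P: "?P \<subseteq> {0..D}" using i by auto
  have H: "hub ?P" using hub_triv[of ?P i] by auto
  have sR: "sym (R ?P)" using sym_col_rel[OF cg P] .
  let ?C = "\<lambda>x. (R ?P)\<^sup>*``{x}"
  have cls': "(R' ?P)\<^sup>*``{x} = ?C x - {v,w}" if "x \<in> V'" for x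
    using class_eq[OF P H that] E_eq_R[of ?P] by simp
  define g where "g c = c - {v,w}" for c :: "'v set"
  have i1: "1 \<le> i" "i \<le> D" using i by auto
  have siv: "s i v \<in> V'" using sjv_V'[OF i1] .
  have vsi: "(v, s i v) \<in> (R ?P)\<^sup>*" using col_relI[OF vV, of i ?P] by auto
  have wv: "(w, v) \<in> R ?P" using col_relI[OF wV, of 0 ?P] s0w by auto
  have A_eq: "V // (R ?P)\<^sup>* = ?C ` V'"
  proof -
    have "?C ` V \<subseteq> ?C ` V'"
    proof
      fix c assume "c \<in> ?C ` V"
      then obtain x where x: "x \<in> V" "c = ?C x" by auto
      show "c \<in> ?C ` V'"
      proof (cases "x \<in> V'")
        case True then show ?thesis using x by auto
      next
        case False
        then have "x = v \<or> x = w" using x V'_eq by auto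
        then have "(x, s i v) \<in> (R ?P)\<^sup>*" using vsi wv by (meson converse_rtrancl_into_rtrancl)
        from sym_rtr_eq[OF sR this] have "c = ?C (s i v)" using x by simp
        then show ?thesis using siv by auto
      qed
    qed
    moreover have "?C ` V' \<subseteq> ?C ` V" using V'_eq by auto
    ultimately show ?thesis unfolding quot_img by auto
  qed
  have A'_eq: "V' // (R' ?P)\<^sup>* = g ` (V // (R ?P)\<^sup>*)"
  proof -
    have "V' // (R' ?P)\<^sup>* = (\<lambda>x. (R' ?P)\<^sup>*``{x}) ` V'" by (rule quot_img)
    also have "\<dots> = (\<lambda>x. g (?C x)) ` V'" using cls' g_def by (intro image_cong) auto
    also have "\<dots> = g ` (?C ` V')" by (simp add: image_image)
    also have "\<dots> = g ` (V // (R ?P)\<^sup>*)" using A_eq by simp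
    finally show ?thesis .
  qed
  have inj: "inj_on g (V // (R ?P)\<^sup>*)"
  proof (rule inj_onI)
    fix c1 c2 assume c1: "c1 \<in> V // (R ?P)\<^sup>*" and c2: "c2 \<in> V // (R ?P)\<^sup>*" and e: "g c1 = g c2"
    obtain x1 where x1: "x1 \<in> V'" "c1 = ?C x1" using c1 A_eq by auto
    obtain x2 where x2: "x2 \<in> V'" "c2 = ?C x2" using c2 A_eq by auto
    have "x1 \<in> g c1" using x1 V'_eq g_def by auto
    then have "x1 \<in> c2" using e g_def by auto
    then have "(x2, x1) \<in> (R ?P)\<^sup>*" using x2 by simp
    from sym_rtr_eq[OF sR this] show "c1 = c2" using x1 x2 by simp
  qed
  have gl: "g c \<inter> legs G = c \<inter> legs G" for c using v_notin_legs g_def by auto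
  have filt: "{c \<in> V' // (R' ?P)\<^sup>*. 0 \<in> ?P \<longrightarrow> c \<inter> legs G' = {}} =
      g ` {c \<in> V // (R ?P)\<^sup>*. 0 \<in> ?P \<longrightarrow> c \<inter> legs G = {}}"
    unfolding A'_eq legs_eq using gl by auto
  have "card (g ` {c \<in> V // (R ?P)\<^sup>*. 0 \<in> ?P \<longrightarrow> c \<inter> legs G = {}}) =
        card {c \<in> V // (R ?P)\<^sup>*. 0 \<in> ?P \<longrightarrow> c \<inter> legs G = {}}"
    by (rule card_image) (rule inj_on_subset[OF inj], auto)
  then show ?thesis unfolding closed_faces_def using filt by simp
qed

lemma cf_pair:
  assumes k: "k \<in> {1..D}" and k': "k' \<in> {1..D}" and kk: "k \<noteq> k'"
  shows "closed_faces G' {k,k'} = closed_faces G {k,k'} - 1 \<and> closed_faces G {k,k'} \<ge> 2"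
proof -
  let ?P = "{k,k'}"
  have P: "?P \<subseteq> {0..D}" using k k' by auto
  have P0: "0 \<notin> ?P" using k k' by auto
  have H: "hub ?P" using hub_pair[OF k k' kk] .
  have sR: "sym (R ?P)" using sym_col_rel[OF cg P] .
  let ?C = "\<lambda>x. (R ?P)\<^sup>*``{x}"
  let ?A = "V // (R ?P)\<^sup>*"
  let ?A' = "V' // (R' ?P)\<^sup>*"
  let ?M = "?C v \<union> ?C w - {v,w}"
  have Ecl: "(E ?P)\<^sup>*``{x} = (if x \<in> ?C v \<union> ?C w then ?C v \<union> ?C w else ?C x)" for x
    unfolding E_def using union_edge_class[OF sR, of v w x] .
  have cls': "(R' ?P)\<^sup>*``{x} = (if x \<in> ?C v \<union> ?C w then ?M else ?C x - {v,w})" if "x \<in> V'" for x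
    using class_eq[OF P H that] Ecl[of x] by simp
  have k1: "1 \<le> k" "k \<le> D" using k by auto
  have skv: "s k v \<in> V'" using sjv_V'[OF k1] .
  have vsk: "s k v \<in> ?C v" using col_relI[OF vV, of k ?P] by auto
  have wCv: "w \<notin> ?C v"
  proof
    assume "w \<in> ?C v"
    then have "(v,w) \<in> (R ?P)\<^sup>*" by simp
    moreover have "(R ?P)\<^sup>* \<subseteq> (R {1..D})\<^sup>*" using col_rel_mono[of ?P "{1..D}" G] k k'
      by (intro rtrancl_mono) auto
    ultimately show False using nb by auto
  qed
  have CvCw: "?C v \<noteq> ?C w" using wCv by auto
  have inA: "?C v \<in> ?A" "?C w \<in> ?A" using vV wV unfolding quot_img by auto
  have finA: "finite ?A" using finV unfolding quot_img by simp
  have sw: "(a,b) \<in> (R ?P)\<^sup>* \<Longrightarrow> (b,a) \<in> (R ?P)\<^sup>*" for a b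
    using sym_rtrancl[OF sR] by (meson symD)
  have notin: "x \<notin> ?C v \<union> ?C w \<Longrightarrow> v \<notin> ?C x \<and> w \<notin> ?C x" for x
    using sw by blast
  have same: "x \<in> ?C v \<union> ?C w \<Longrightarrow> ?C x = ?C v \<or> ?C x = ?C w" for x
  proof -
    assume "x \<in> ?C v \<union> ?C w"
    then have "(v,x) \<in> (R ?P)\<^sup>* \<or> (w,x) \<in> (R ?P)\<^sup>*" by simp
    then show ?thesis
    proof
      assume "(v,x) \<in> (R ?P)\<^sup>*"
      from sym_rtr_eq[OF sR this] show ?thesis by simp
    next
      assume "(w,x) \<in> (R ?P)\<^sup>*"
      from sym_rtr_eq[OF sR this] show ?thesis by simp
    qed
  qed
  have A'_eq: "?A' = (?A - {?C v, ?C w}) \<union> {?M}"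
  proof
    show "?A' \<subseteq> (?A - {?C v, ?C w}) \<union> {?M}"
    proof
      fix c assume "c \<in> ?A'"
      then obtain x where x: "x \<in> V'" "c = (R' ?P)\<^sup>*``{x}" unfolding quot_img by auto
      show "c \<in> (?A - {?C v, ?C w}) \<union> {?M}"
      proof (cases "x \<in> ?C v \<union> ?C w")
        case True then show ?thesis using x cls' by simp
      next
        case False
        have c: "c = ?C x" using x cls'[OF x(1)] False notin[OF False] by auto
        have "x \<in> ?C x" by simp
        then have "?C x \<noteq> ?C v" "?C x \<noteq> ?C w" using False by auto
        moreover have "?C x \<in> ?A" using x V'_eq unfolding quot_img by auto
        ultimately show ?thesis using c by simp
      qed
    qed
  next
    show "(?A - {?C v, ?C w}) \<union> {?M} \<subseteq> ?A'"
    proof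
      fix c assume c: "c \<in> (?A - {?C v, ?C w}) \<union> {?M}"
      show "c \<in> ?A'"
      proof (cases "c = ?M")
        case True
        have "(R' ?P)\<^sup>*``{s k v} = ?M" using cls'[OF skv] vsk by simp
        then show ?thesis using True skv unfolding quot_img by (metis imageI)
      next
        case False
        then obtain x where x: "x \<in> V" "c = ?C x" "c \<noteq> ?C v" "c \<noteq> ?C w"
          using c unfolding quot_img by auto
        have xn: "x \<notin> ?C v \<union> ?C w"
        proof
          assume "x \<in> ?C v \<union> ?C w"
          then have "?C x = ?C v \<or> ?C x = ?C w" using same by blast
          then show False using x by auto
        qed
        have "x \<noteq> v" "x \<noteq> w" using xn by auto
        then have xV': "x \<in> V'" using x V'_eq by auto
        have "(R' ?P)\<^sup>*``{x} = c" using cls'[OF xV'] xn notin[OF xn] x by auto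
        then show ?thesis using xV' unfolding quot_img by (metis imageI)
      qed
    qed
  qed
  have Mn: "?M \<notin> ?A - {?C v, ?C w}"
  proof
    assume a: "?M \<in> ?A - {?C v, ?C w}"
    then have a1: "?M \<in> ?A" "?M \<noteq> ?C v" "?M \<noteq> ?C w" by auto
    then obtain x where x0: "x \<in> V" "?M = ?C x" unfolding quot_img by blast
    then have x: "x \<in> V" "?M = ?C x" "?C x \<noteq> ?C v" "?C x \<noteq> ?C w" using a1 by auto
    have "x \<in> ?C x" by simp
    then have "x \<in> ?C v \<union> ?C w" using x(2) by blast
    then have "?C x = ?C v \<or> ?C x = ?C w" using same by blast
    then show False using x by auto
  qed
  have c2: "card (?A - {?C v, ?C w}) = card ?A - 2"
    using finA inA CvCw by (subst card_Diff_subset) auto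
  have ge: "card ?A \<ge> 2"
  proof -
    have "card {?C v, ?C w} \<le> card ?A" using finA inA by (intro card_mono) auto
    then show ?thesis using CvCw by simp
  qed
  have "card ?A' = card ?A - 1"
    unfolding A'_eq using Mn c2 ge finA by (subst card_Un_disjoint) auto
  moreover have "closed_faces G ?P = card ?A" "closed_faces G' ?P = card ?A'"
    unfolding closed_faces_def using P0 by auto
  ultimately show ?thesis using ge by simp
qed

lemma bsig_eq:
  assumes i: "i \<le> D" and x: "x \<in> legs G"
  shows "bsig G' i x = bsig G i x"
proof -
  let ?P = "{0,i}"
  have P: "?P \<subseteq> {0..D}" using i by auto
  have H: "hub ?P" using hub_triv[of ?P i] by auto
  have xV': "x \<in> V'" using x v_notin_legs V'_eq unfolding legs_def by auto
  have cls': "(R' ?P)\<^sup>*``{x} = (R ?P)\<^sup>*``{x} - {v,w}"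
    using class_eq[OF P H xV'] E_eq_R[of ?P] by simp
  have "(y \<in> legs G' \<and> y \<noteq> x \<and> (x, y) \<in> (R' ?P)\<^sup>*) =
        (y \<in> legs G \<and> y \<noteq> x \<and> (x, y) \<in> (R ?P)\<^sup>*)" for y
    using cls' legs_eq v_notin_legs by blast
  then show ?thesis unfolding bsig_def by simp
qed

lemma bd_rel_eq:
  assumes C: "C \<subseteq> {0..D}"
  shows "bd_rel G' C = bd_rel G C"
proof -
  have e: "x \<in> legs G \<Longrightarrow> i \<in> C \<Longrightarrow> bsig G' i x = bsig G i x" for x i
    using bsig_eq C by auto
  show ?thesis
  proof (intro set_eqI iffI)
    fix z assume "z \<in> bd_rel G' C"
    then obtain x i where z: "z = (x, bsig G' i x)" "x \<in> legs G" "i \<in> C"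
      unfolding bd_rel_def legs_eq by blast
    then show "z \<in> bd_rel G C" unfolding bd_rel_def using e by auto
  next
    fix z assume "z \<in> bd_rel G C"
    then obtain x i where z: "z = (x, bsig G i x)" "x \<in> legs G" "i \<in> C"
      unfolding bd_rel_def by blast
    then show "z \<in> bd_rel G' C" unfolding bd_rel_def legs_eq using e[OF z(2,3)] by force
  qed
qed

end

lemma Suc_mod_lt: "l < n \<Longrightarrow> Suc l mod n = (if Suc l = n then 0 else Suc l)"
  by (simp add: mod_Suc)

lemma jp_elem:
  assumes d: "distinct js" and n: "length js \<ge> 2" and P: "P \<in> jacket_pairs js"
  shows "\<exists>a b. P = {a,b} \<and> a \<noteq> b \<and> a \<in> set js \<and> b \<in> set js"
proof -
  obtain k where k: "k < length js" "P = {js ! k, js ! (Suc k mod length js)}"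
    using P unfolding jacket_pairs_def by auto
  let ?n = "length js"
  have sk: "Suc k mod ?n < ?n" using n by (intro mod_less_divisor) linarith
  have ne: "Suc k mod ?n \<noteq> k"
  proof -
    have "Suc k mod ?n = (if Suc k = ?n then 0 else Suc k)" using Suc_mod_lt[OF k(1)] .
    moreover have "(if Suc k = ?n then 0 else Suc k) \<noteq> k" using n by simp
    ultimately show ?thesis by simp
  qed
  have "js ! k \<noteq> js ! (Suc k mod ?n)" using nth_eq_iff_index_eq[OF d k(1) sk] ne by auto
  then show ?thesis using k sk by (intro exI[of _ "js ! k"] exI[of _ "js ! (Suc k mod ?n)"]) auto
qed

lemma jp_card:
  assumes d: "distinct js" and n3: "length js \<ge> 3" and z: "0 \<in> set js"
  shows "card {P \<in> jacket_pairs js. 0 \<notin> P} = length js - 2"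
proof -
  let ?n = "length js"
  define f where "f k = {js ! k, js ! (Suc k mod ?n)}" for k
  have JP: "jacket_pairs js = f ` {..<?n}" unfolding jacket_pairs_def f_def by auto
  have skl: "k < ?n \<Longrightarrow> Suc k mod ?n < ?n" for k using n3 by (intro mod_less_divisor) linarith
  have inj: "inj_on f {..<?n}"
  proof (rule inj_onI)
    fix k l assume k: "k \<in> {..<?n}" and l: "l \<in> {..<?n}" and e: "f k = f l"
    have kl: "k < ?n" "l < ?n" using k l by auto
    have eq: "js ! i = js ! j \<longleftrightarrow> i = j" if "i < ?n" "j < ?n" for i j
      using nth_eq_iff_index_eq[OF d that] .
    from e have "(js ! k = js ! l \<and> js ! (Suc k mod ?n) = js ! (Suc l mod ?n)) \<or>
         (js ! k = js ! (Suc l mod ?n) \<and> js ! (Suc k mod ?n) = js ! l)"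
      unfolding f_def by (auto simp: doubleton_eq_iff)
    then show "k = l"
    proof
      assume "js ! k = js ! l \<and> js ! (Suc k mod ?n) = js ! (Suc l mod ?n)"
      then show ?thesis using eq kl by auto
    next
      assume a: "js ! k = js ! (Suc l mod ?n) \<and> js ! (Suc k mod ?n) = js ! l"
      then have h1: "k = Suc l mod ?n" "Suc k mod ?n = l" using eq kl skl by auto
      have e1: "k = (if Suc l = ?n then 0 else Suc l)" using h1(1) Suc_mod_lt[OF kl(2)] by simp
      have e2: "l = (if Suc k = ?n then 0 else Suc k)" using h1(2) Suc_mod_lt[OF kl(1)] by simp
      show ?thesis
      proof (cases "Suc l = ?n")
        case True
        then have "k = 0" using e1 by simp
        then have "l = 1" using e2 n3 by simp
        then show ?thesis using True n3 by simp
      next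
        case False
        then have "k = Suc l" using e1 by simp
        then show ?thesis using e2 n3 kl by (cases "Suc k = ?n") auto
      qed
    qed
  qed
  obtain p where p: "p < ?n" "js ! p = 0" using z by (metis in_set_conv_nth)
  define q where "q = (if p = 0 then ?n - 1 else p - 1)"
  have zero: "k < ?n \<Longrightarrow> (js ! k = 0 \<longleftrightarrow> k = p)" for k
    using nth_eq_iff_index_eq[OF d _ p(1), of k] p(2) by auto
  have zz: "k < ?n \<Longrightarrow> (0 \<in> f k \<longleftrightarrow> k = p \<or> k = q)" for k
  proof -
    assume k: "k < ?n"
    have "0 \<in> f k \<longleftrightarrow> js ! k = 0 \<or> js ! (Suc k mod ?n) = 0" unfolding f_def by auto
    also have "\<dots> \<longleftrightarrow> k = p \<or> Suc k mod ?n = p" using zero[OF k] zero[OF skl[OF k]] by simp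
    also have "\<dots> \<longleftrightarrow> k = p \<or> (if Suc k = ?n then 0 else Suc k) = p"
      using Suc_mod_lt[OF k] by simp
    also have "\<dots> \<longleftrightarrow> k = p \<or> k = q" using k p(1) unfolding q_def by (cases "p = 0") auto
    finally show ?thesis .
  qed
  have pq: "p \<noteq> q" "q < ?n" using q_def p(1) n3 by auto
  have S0: "{k \<in> {..<?n}. 0 \<in> f k} = {p, q}" using zz p(1) pq by auto
  have "{P \<in> jacket_pairs js. 0 \<notin> P} = f ` {k \<in> {..<?n}. 0 \<notin> f k}" unfolding JP by auto
  moreover have "card (f ` {k \<in> {..<?n}. 0 \<notin> f k}) = card {k \<in> {..<?n}. 0 \<notin> f k}"
    by (rule card_image) (rule inj_on_subset[OF inj], auto)
  moreover have "{k \<in> {..<?n}. 0 \<notin> f k} = {..<?n} - {p,q}" using S0 by auto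
  moreover have "card ({..<?n} - {p,q}) = ?n - 2" using pq p(1) by (subst card_Diff_subset) auto
  ultimately show ?thesis by simp
qed

context cstep begin

lemma sum_cf:
  assumes js: "is_jacket D js" and D3: "D \<ge> 3"
  shows "(\<Sum>P\<in>jacket_pairs js. real (closed_faces G' P)) =
         (\<Sum>P\<in>jacket_pairs js. real (closed_faces G P)) - (real D - 1)"
proof -
  have d: "distinct js" and sj: "set js = {0..D}" using js unfolding is_jacket_def by auto
  have len: "length js = D + 1" using distinct_card[OF d] sj by simp
  have fin: "finite (jacket_pairs js)" unfolding jacket_pairs_def by simp
  have each: "real (closed_faces G' P) = real (closed_faces G P) - (if 0 \<in> P then 0 else 1)"
    if P: "P \<in> jacket_pairs js" for P
  proof -
    obtain a b where ab: "P = {a,b}" "a \<noteq> b" "a \<in> {0..D}" "b \<in> {0..D}"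
      using jp_elem[OF d _ P] len sj D3 by auto
    show ?thesis
    proof (cases "0 \<in> P")
      case True
      have "\<exists>c. P = {0,c} \<and> c \<in> {1..D}" using ab True
        by (cases "a = 0") (auto simp: insert_commute)
      then obtain c where c: "P = {0,c}" "c \<in> {1..D}" by blast
      then show ?thesis using cf_0[of c] True by simp
    next
      case False
      then have "a \<in> {1..D}" "b \<in> {1..D}" using ab by auto
      then show ?thesis using cf_pair[of a b] ab False by (simp add: of_nat_diff)
    qed
  qed
  have "(\<Sum>P\<in>jacket_pairs js. real (closed_faces G' P)) =
        (\<Sum>P\<in>jacket_pairs js. real (closed_faces G P) - (if 0 \<in> P then 0 else 1))"
    using each by (rule sum.cong[OF refl])
  also have "\<dots> = (\<Sum>P\<in>jacket_pairs js. real (closed_faces G P)) -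
       (\<Sum>P\<in>jacket_pairs js. (if 0 \<in> P then 0 else 1))"
    by (simp add: sum_subtractf)
  also have "(\<Sum>P\<in>jacket_pairs js. (if 0 \<in> P then 0 else 1)) = (\<Sum>P\<in>jacket_pairs js. (if 0 \<notin> P then 1 else (0::real)))"
    by (intro sum.cong) auto
  also have "\<dots> = (\<Sum>P\<in>{P \<in> jacket_pairs js. 0 \<notin> P}. (1::real))"
    using sum.inter_filter[OF fin, of "\<lambda>_. (1::real)" "\<lambda>P. 0 \<notin> P"] by simp
  also have "\<dots> = real (card {P \<in> jacket_pairs js. 0 \<notin> P})" by simp
  also have "card {P \<in> jacket_pairs js. 0 \<notin> P} = D - 1"
    using jp_card[OF d] len sj D3 by simp
  finally show ?thesis using D3 by (simp add: of_nat_diff)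
qed

lemma step_genus:
  assumes D3: "D \<ge> 3"
  shows "(is_jacket D js \<longrightarrow> pinched_genus D G js = pinched_genus D G' js) \<and>
         (is_bjacket D js \<longrightarrow> boundary_genus D G js = boundary_genus D G' js)"
proof (intro conjI impI)
  assume js: "is_jacket D js"
  have d: "distinct js" and sj: "set js = {0..D}" using js unfolding is_jacket_def by auto
  have len: "length js = D + 1" using distinct_card[OF d] sj by simp
  have Csub: "{c. {0, c} \<in> jacket_pairs js} \<subseteq> {0..D}"
  proof
    fix c assume "c \<in> {c. {0, c} \<in> jacket_pairs js}"
    then obtain a b where "{0,c} = {a,b}" "a \<in> set js" "b \<in> set js"
      using jp_elem[OF d, of "{0,c}"] len D3 by auto
    then show "c \<in> {0..D}" using sj by (auto simp: doubleton_eq_iff)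
  qed
  have F: "real (pinched_faces G' js) = real (pinched_faces G js) - (real D - 1)"
    unfolding pinched_faces_def using sum_cf[OF js D3] bd_rel_eq[OF Csub] legs_eq by simp
  have cV: "real (card V') = real (card V) - 2"
  proof -
    have "card {v,w} \<le> card V" using vV wV finV by (intro card_mono) auto
    then have "card V \<ge> 2" using vw by simp
    then show ?thesis using card_V' by (simp add: of_nat_diff)
  qed
  show "pinched_genus D G js = pinched_genus D G' js"
    unfolding pinched_genus_def n_int_lines_def legs_eq cV F by (simp add: field_simps)
next
  assume js: "is_bjacket D js"
  have d: "distinct js" and sj: "set js = {1..D}" using js unfolding is_bjacket_def by auto
  have len: "length js = D" using distinct_card[OF d] sj by simp
  have Ps: "P \<subseteq> {0..D}" if "P \<in> jacket_pairs js" for P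
    using jp_elem[OF d _ that] len sj D3 by auto
  have "(\<Sum>P\<in>jacket_pairs js. ncomp (legs G') (bd_rel G' P)) = (\<Sum>P\<in>jacket_pairs js. ncomp (legs G) (bd_rel G P))"
    using Ps bd_rel_eq legs_eq by (intro sum.cong) auto
  moreover have "bd_rel G' {1..D} = bd_rel G {1..D}" using bd_rel_eq by auto
  ultimately show "boundary_genus D G js = boundary_genus D G' js"
    unfolding boundary_genus_def using legs_eq by simp
qed

end

definition forest_inv :: "nat \<Rightarrow> 'v cgraph \<Rightarrow> ('v \<times> 'v) list \<Rightarrow> bool" where
  "forest_inv D G ts \<longleftrightarrow> colored_graph D G \<and> (\<forall>t\<in>set ts. int_white G t) \<and>
     distinct (map (\<lambda>(v, w). {v, w}) ts) \<and>
     (\<forall>t\<in>set ts. (fst t, snd t) \<notin> (col_rel G {1..D} \<union> (set ts - {t}) \<union> (set ts - {t})\<inverse>)\<^sup>*)"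

lemma forest_step:
  assumes inv: "forest_inv D G (t # ts)"
  shows "cstep D G (fst t) (snd t) \<and> forest_inv D (contract G t) ts"
proof -
  obtain v w where t: "t = (v,w)" by (cases t)
  have cg: "colored_graph D G" using inv unfolding forest_inv_def by auto
  have iw: "int_white G (v,w)" using inv t unfolding forest_inv_def by auto
  then have vV: "v \<in> verts G" and wd: "w = sig G 0 v" and vw: "v \<noteq> w" unfolding int_white_def by auto
  have nb0: "(v, w) \<notin> (col_rel G {1..D} \<union> (set (t#ts) - {t}) \<union> (set (t#ts) - {t})\<inverse>)\<^sup>*"
    using inv t unfolding forest_inv_def by auto
  have nb: "(v,w) \<notin> (col_rel G {1..D})\<^sup>*"
  proof
    assume "(v,w) \<in> (col_rel G {1..D})\<^sup>*"
    moreover have "(col_rel G {1..D})\<^sup>* \<subseteq> (col_rel G {1..D} \<union> (set (t#ts) - {t}) \<union> (set (t#ts) - {t})\<inverse>)\<^sup>*"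
      by (rule rtrancl_mono) blast
    ultimately show False using nb0 by blast
  qed
  interpret c: cstep D G v w using cg vV wd vw nb by unfold_locales auto
  have G'eq: "contract G t = c.G'" unfolding c.G'_def t by simp
  have dist: "distinct (map (\<lambda>(v, w). {v, w}) (t # ts))" using inv unfolding forest_inv_def by auto
  have tn: "t \<notin> set ts" using dist by auto
  have iw2: "int_white c.G' t'" if t': "t' \<in> set ts" for t'
  proof -
    obtain a b where ab: "t' = (a,b)" by (cases t')
    have "int_white G t'" using inv t' unfolding forest_inv_def by auto
    then have a: "a \<in> verts G" "b = sig G 0 a" "b \<noteq> a" using ab unfolding int_white_def by auto
    have "{a,b} \<noteq> {v,w}" using dist t t' ab by (auto simp: rev_image_eqI)
    then have "a \<noteq> v" "a \<noteq> w" using a wd c.s0w by auto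
    then have "a \<in> verts c.G'" using a c.V'_eq by auto
    then show ?thesis unfolding int_white_def using ab a c.s'0 by simp
  qed
  have forest: "(fst t', snd t') \<notin> (col_rel c.G' {1..D} \<union> (set ts - {t'}) \<union> (set ts - {t'})\<inverse>)\<^sup>*"
    if t': "t' \<in> set ts" for t'
  proof
    assume a: "(fst t', snd t') \<in> (col_rel c.G' {1..D} \<union> (set ts - {t'}) \<union> (set ts - {t'})\<inverse>)\<^sup>*"
    let ?S = "set (t#ts) - {t'}"
    let ?X = "col_rel G {1..D} \<union> ?S \<union> ?S\<inverse>"
    have tS: "t \<in> ?S" using t' tn by auto
    have "col_rel c.G' {1..D} \<union> (set ts - {t'}) \<union> (set ts - {t'})\<inverse> \<subseteq> ?X\<^sup>*"
    proof -
      have "col_rel c.G' {1..D} \<subseteq> ?X\<^sup>*"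
      proof
        fix p assume p: "p \<in> col_rel c.G' {1..D}"
        have "p \<in> (c.E {1..D})\<^sup>*" using c.Rp_sub_E[of "{1..D}"] p by (cases p) auto
        moreover have "c.E {1..D} \<subseteq> ?X" unfolding c.E_def using tS t by auto
        ultimately show "p \<in> ?X\<^sup>*" using rtrancl_mono by blast
      qed
      moreover have "(set ts - {t'}) \<union> (set ts - {t'})\<inverse> \<subseteq> ?X\<^sup>*" by auto
      ultimately show ?thesis by blast
    qed
    then have "(fst t', snd t') \<in> ?X\<^sup>*" using a rtrancl_subset_rtrancl by blast
    moreover have "t' \<in> set (t#ts)" using t' by simp
    ultimately show False using inv unfolding forest_inv_def by blast
  qed
  have "forest_inv D c.G' ts"
    unfolding forest_inv_def using c.cg' iw2 forest dist by auto
  then show ?thesis using G'eq t c.cstep_axioms by simp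
qed

lemma genus_list:
  assumes "forest_inv D G ts" "D \<ge> 3"
  shows "(is_jacket D js \<longrightarrow> pinched_genus D G js = pinched_genus D (foldl contract G ts) js) \<and>
         (is_bjacket D js \<longrightarrow> boundary_genus D G js = boundary_genus D (foldl contract G ts) js)"
  using assms
proof (induction ts arbitrary: G)
  case Nil
  then show ?case by simp
next
  case (Cons t ts)
  from forest_step[OF Cons.prems(1)]
  have c: "cstep D G (fst t) (snd t)" and f: "forest_inv D (contract G t) ts" by auto
  have "contract G t = cstep.G' G (fst t) (snd t)" unfolding cstep.G'_def[OF c] by simp
  then have st: "(is_jacket D js \<longrightarrow> pinched_genus D G js = pinched_genus D (contract G t) js) \<and>
         (is_bjacket D js \<longrightarrow> boundary_genus D G js = boundary_genus D (contract G t) js)"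
    using cstep.step_genus[OF c Cons.prems(2)] by simp
  show ?case using st Cons.IH[OF f Cons.prems(2)] by simp
qed

lemma white_tree_inv:
  assumes cg: "colored_graph D G" and wt: "white_tree D G ts"
  shows "forest_inv D G ts"
proof -
  have iw: "\<forall>t\<in>set ts. int_white G t" and dist: "distinct (map (\<lambda>(v, w). {v, w}) ts)"
    and tc: "tree_conn D G (set ts)" and mn: "\<forall>t\<in>set ts. \<not> tree_conn D G (set ts - {t})"
    using wt unfolding white_tree_def by auto
  have "(fst t, snd t) \<notin> (col_rel G {1..D} \<union> (set ts - {t}) \<union> (set ts - {t})\<inverse>)\<^sup>*"
    if t: "t \<in> set ts" for t
  proof
    let ?S = "set ts - {t}"
    let ?X = "col_rel G {1..D} \<union> ?S \<union> ?S\<inverse>"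
    assume a: "(fst t, snd t) \<in> ?X\<^sup>*"
    have symX: "sym ?X" using sym_col_rel[OF cg, of "{1..D}"] unfolding sym_def by auto
    have b: "(snd t, fst t) \<in> ?X\<^sup>*" using a sym_rtrancl[OF symX] by (meson symD)
    have "col_rel G {1..D} \<union> set ts \<union> (set ts)\<inverse> \<subseteq> ?X\<^sup>*"
    proof
      fix p assume p: "p \<in> col_rel G {1..D} \<union> set ts \<union> (set ts)\<inverse>"
      show "p \<in> ?X\<^sup>*"
      proof (cases "p = t \<or> p = (snd t, fst t)")
        case True then show ?thesis using a b by (cases t) auto
      next
        case False then show ?thesis using p by (cases t) auto
      qed
    qed
    then have "(col_rel G {1..D} \<union> set ts \<union> (set ts)\<inverse>)\<^sup>* \<subseteq> ?X\<^sup>*" by (rule rtrancl_subset_rtrancl)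
    then have "tree_conn D G ?S" using tc unfolding tree_conn_def by blast
    then show False using mn t by blast
  qed
  then show ?thesis unfolding forest_inv_def using cg iw dist by blast
qed

theorem lemma1:
  fixes D :: nat and G :: "'v cgraph" and ts :: "('v \<times> 'v) list"
  assumes "D \<ge> 3"
    and "colored_graph D G"
    and "cg_connected D G"
    and "white_tree D G ts"
  shows "(\<forall>js. is_jacket D js \<longrightarrow>
            pinched_genus D G js = pinched_genus D (contract_tree G ts) js) \<and>
         (\<forall>js. is_bjacket D js \<longrightarrow>
            boundary_genus D G js = boundary_genus D (contract_tree G ts) js)"
  using genus_list[OF white_tree_inv[OF assms(2,4)] assms(1)] unfolding contract_tree_def by blast

end
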